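(* For $v\in\mathbb R$ consider the stationary phase points, i.e. the zeros of the polynomial $12\prod_{k=0}^g(z-\tilde\lambda_k)+v\prod_{k=1}^g(z-\lambda_k)$, denoted $z_j(v)$, $0\le j\le g$. Set $\lambda_0=-\infty$ and $\lambda_{g+1}=\infty$. Then (with suitable labelling) $\lambda_j<z_j(v)<\lambda_{j+1}$, and there is always at least one stationary phase point in each spectral gap. Moreover, each $z_j(v)$ is strictly decreasing in $v$ with $\lim_{v\to-\infty}z_j(v)=\lambda_{j+1}$ and $\lim_{v\to\infty}z_j(v)=\lambda_j$.
   Context: Fix $g\in\mathbb N_0$ and real $E_0<E_1<\dots<E_{2g}$; $R_{2g+1}^{1/2}(z)=\mathrm i\prod_{j=0}^{2g}\sqrt{z-E_j}$ defines the hyperelliptic Riemann surface $\mathcal K_g$, with spectrum $\sigma=\bigcup_{j=0}^{g-1}[E_{2j},E_{2j+1}]\cup[E_{2g},\infty)$ and spectral gaps $(E_{2j-1},E_{2j})$, $1\le j\le g$. The numbers $\lambda_j$ ($1\le j\le g$) and $\tilde\lambda_j$ ($0\le j\le g$) are defined by requiring that $\omega_{p_\infty,0}=\frac1{2\mathrm i}\frac{\prod_{j=1}^g(\pi-\lambda_j)}{R_{2g+1}^{1/2}}d\pi$ and $\omega_{p_\infty,2}=\frac1{2\mathrm i}\frac{\prod_{j=0}^g(\pi-\tilde\lambda_j)}{R_{2g+1}^{1/2}}d\pi$ have vanishing $a$-periods (the $a_j$ cycle encircles the $j$-th gap changing sheets), with $\sum_{j=0}^g\tilde\lambda_j=\frac12\sum_{j=0}^{2g}E_j$;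 they are real, $\lambda_j$ and $\tilde\lambda_j$ ($j\ge1$) lie in the $j$-th gap. The stationary phase points are the zeros of $\phi'$ for the phase $\phi(p)=-24\mathrm i\int^p\omega_{p_\infty,2}-2\mathrm iv\int^p\omega_{p_\infty,0}$. *)

theory Defs
  imports "HOL-Analysis.Analysis"
begin

text \<open>Vanishing of the a_j-period of the differential (1/2i) p(pi)/R_{2g+1}^{1/2} d pi.
  The cycle a_j encircles the j-th gap (E_{2j-1}, E_{2j}) changing sheets, so the a_j-period
  equals a nonzero constant times the (absolutely convergent) real integral over the gap of
  p(x)/sqrt|prod_i (x - E_i)|.  Hence vanishing of the period means this integral is 0.\<close>
definition a_period_vanishes :: "(nat \<Rightarrow> real) \<Rightarrow> nat \<Rightarrow> (real \<Rightarrow> real) \<Rightarrow> nat \<Rightarrow> bool" where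
  "a_period_vanishes E g p j \<longleftrightarrow>
     ((\<lambda>x. p x / sqrt \<bar>\<Prod>i\<in>{0..2*g}. x - E i\<bar>) has_integral 0) {E (2*j-1)..E (2*j)}"

end

theory Submission
  imports Defs
begin


lemma E_mono_aux:
  fixes E :: "nat \<Rightarrow> real"
  assumes "\<forall>i<2*g. E i < E (Suc i)" "i < j" "j \<le> 2*g"
  shows "E i < E j"
  using assms(2,3)
proof (induction j)
  case 0 then show ?case by simp
next
  case (Suc j)
  show ?case
  proof (cases "i = j")
    case True then show ?thesis using assms(1) Suc by auto
  next
    case False
    then have "E i < E j" using Suc by auto
    also have "E j < E (Suc j)" using assms(1) Suc by auto
    finally show ?thesis .
  qed
qed

locale LL =
  fixes g :: nat and E lam lt :: "nat \<Rightarrow> real"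
  assumes E_incr: "\<forall>i<2*g. E i < E (Suc i)"
    and lam_per: "\<forall>j\<in>{1..g}. a_period_vanishes E g (\<lambda>x. \<Prod>k\<in>{1..g}. x - lam k) j"
    and lt_per: "\<forall>j\<in>{1..g}. a_period_vanishes E g (\<lambda>x. \<Prod>k\<in>{0..g}. x - lt k) j"
    and lam_gap: "\<forall>j\<in>{1..g}. E (2*j-1) < lam j \<and> lam j < E (2*j)"
begin

definition P :: "real \<Rightarrow> real" where "P x = (\<Prod>k\<in>{0..g}. x - lt k)"
definition Q :: "real \<Rightarrow> real" where "Q x = (\<Prod>k\<in>{1..g}. x - lam k)"
definition Pp :: "real poly" where "Pp = (\<Prod>k\<in>{0..g}. [:- lt k, 1:])"
definition Qp :: "real poly" where "Qp = (\<Prod>k\<in>{1..g}. [:- lam k, 1:])"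
definition s :: "real \<Rightarrow> real" where "s x = sqrt \<bar>\<Prod>i\<in>{0..2*g}. x - E i\<bar>"
definition Gp :: "real \<Rightarrow> real poly" where "Gp c = Pp - smult c Qp"
definition Wp :: "real poly" where "Wp = pderiv Pp * Qp - Pp * pderiv Qp"
definition h :: "real \<Rightarrow> real" where "h x = P x / Q x"
definition inI :: "nat \<Rightarrow> real \<Rightarrow> bool" where
  "inI j x \<longleftrightarrow> (j = 0 \<or> lam j < x) \<and> (j = g \<or> x < lam (j+1))"
definition inG :: "nat \<Rightarrow> real \<Rightarrow> bool" where
  "inG m x \<longleftrightarrow> E (2*m-1) < x \<and> x < E (2*m)"

lemma E_mono: "i < j \<Longrightarrow> j \<le> 2*g \<Longrightarrow> E i < E j"
  using E_mono_aux[OF E_incr] by blast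

lemma E_mono_le: "i \<le> j \<Longrightarrow> j \<le> 2*g \<Longrightarrow> E i \<le> E j"
  using E_mono[of i j] by (cases "i = j") auto

lemma gap_sep: "m \<in> {1..g} \<Longrightarrow> m' \<in> {1..g} \<Longrightarrow> m < m' \<Longrightarrow> E (2*m) < E (2*m'-1)"
  by (rule E_mono) auto

lemma inG_lt: "m \<in> {1..g} \<Longrightarrow> m' \<in> {1..g} \<Longrightarrow> m < m' \<Longrightarrow> inG m x \<Longrightarrow> inG m' y \<Longrightarrow> x < y"
  using gap_sep[of m m'] unfolding inG_def by auto

lemma inG_disj: assumes "m \<in> {1..g}" "m' \<in> {1..g}" "inG m x" "inG m' x" shows "m = m'"
proof (rule ccontr)
  assume "m \<noteq> m'"
  then have "m < m' \<or> m' < m" by arith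
  then show False using inG_lt[OF assms(1,2) _ assms(3,4)] inG_lt[OF assms(2,1) _ assms(4,3)] by auto
qed

lemma lam_inG: "m \<in> {1..g} \<Longrightarrow> inG m (lam m)"
  using lam_gap unfolding inG_def by auto

lemma lam_mono: "m \<in> {1..g} \<Longrightarrow> m' \<in> {1..g} \<Longrightarrow> m < m' \<Longrightarrow> lam m < lam m'"
  using inG_lt lam_inG by blast

lemma lam_mono_le: "m \<in> {1..g} \<Longrightarrow> m' \<in> {1..g} \<Longrightarrow> m \<le> m' \<Longrightarrow> lam m \<le> lam m'"
  using lam_mono[of m m'] by (cases "m = m'") auto

lemma poly_Pp [simp]: "poly Pp x = P x"
  by (simp add: Pp_def P_def poly_prod)

lemma poly_Qp [simp]: "poly Qp x = Q x"
  by (simp add: Qp_def Q_def poly_prod)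

lemma poly_Gp [simp]: "poly (Gp c) x = P x - c * Q x"
  by (simp add: Gp_def)

lemma poly_Wp: "poly Wp x = poly (pderiv Pp) x * Q x - P x * poly (pderiv Qp) x"
  by (simp add: Wp_def)

lemma degree_Pp: "degree Pp = Suc g" and lead_Pp: "lead_coeff Pp = 1"
proof -
  have "degree Pp = (\<Sum>k\<in>{0..g}. degree [:- lt k, 1:])"
    unfolding Pp_def by (rule degree_prod_eq_sum_degree) auto
  then show "degree Pp = Suc g" by simp
  show "lead_coeff Pp = 1" unfolding Pp_def lead_coeff_prod by simp
qed

lemma degree_Qp: "degree Qp = g" and lead_Qp: "lead_coeff Qp = 1"
proof -
  have "degree Qp = (\<Sum>k\<in>{1..g}. degree [:- lam k, 1:])"
    unfolding Qp_def by (rule degree_prod_eq_sum_degree) auto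
  then show "degree Qp = g" by simp
  show "lead_coeff Qp = 1" unfolding Qp_def lead_coeff_prod by simp
qed

lemma degree_Gp: "degree (Gp c) = Suc g" and Gp_nz: "Gp c \<noteq> 0"
proof -
  have "Gp c = Pp + smult (- c) Qp" by (simp add: Gp_def)
  moreover have "degree (smult (- c) Qp) < degree Pp"
    using degree_Pp degree_Qp by simp
  ultimately show dg: "degree (Gp c) = Suc g" using degree_add_eq_left[of "smult (- c) Qp" Pp] degree_Pp by simp
  then show "Gp c \<noteq> 0" by auto
qed

lemma s_pos: "m \<in> {1..g} \<Longrightarrow> inG m x \<Longrightarrow> 0 < s x"
proof -
  assume m: "m \<in> {1..g}" and x: "inG m x"
  have "\<forall>i\<in>{0..2*g}. x - E i \<noteq> 0"
  proof
    fix i assume i: "i \<in> {0..2*g}"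
    show "x - E i \<noteq> 0"
    proof (cases "i \<le> 2*m-1")
      case True
      then have "E i \<le> E (2*m-1)" using E_mono_le m by auto
      then show ?thesis using x unfolding inG_def by auto
    next
      case False
      then have "E (2*m) \<le> E i" using E_mono_le m i by auto
      then show ?thesis using x unfolding inG_def by auto
    qed
  qed
  then have "(\<Prod>i\<in>{0..2*g}. x - E i) \<noteq> 0" by simp
  then show ?thesis unfolding s_def by simp
qed

lemma s_zero: "m \<in> {1..g} \<Longrightarrow> s (E (2*m-1)) = 0 \<and> s (E (2*m)) = 0"
proof -
  assume m: "m \<in> {1..g}"
  have "2*m-1 \<in> {0..2*g}" "2*m \<in> {0..2*g}" using m by auto
  then have "(\<Prod>i\<in>{0..2*g}. E (2*m-1) - E i) = 0" "(\<Prod>i\<in>{0..2*g}. E (2*m) - E i) = 0"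
    by (auto intro!: prod_zero)
  then show ?thesis unfolding s_def by simp
qed

lemma s_cont: "continuous_on A s"
  unfolding s_def by (intro continuous_intros)

lemma period_Q: "m \<in> {1..g} \<Longrightarrow> ((\<lambda>x. Q x / s x) has_integral 0) {E (2*m-1)..E (2*m)}"
  using lam_per unfolding a_period_vanishes_def Q_def s_def by auto

lemma period_P: "m \<in> {1..g} \<Longrightarrow> ((\<lambda>x. P x / s x) has_integral 0) {E (2*m-1)..E (2*m)}"
  using lt_per unfolding a_period_vanishes_def P_def s_def by auto

lemma period_G: "m \<in> {1..g} \<Longrightarrow> ((\<lambda>x. poly (Gp c) x / s x) has_integral 0) {E (2*m-1)..E (2*m)}"
proof -
  assume m: "m \<in> {1..g}"
  have "((\<lambda>x. P x / s x - c * (Q x / s x)) has_integral (0 - c * 0)) {E (2*m-1)..E (2*m)}"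
    by (intro has_integral_diff has_integral_mult_right period_P period_Q m)
  moreover have "(\<lambda>x. P x / s x - c * (Q x / s x)) = (\<lambda>x. poly (Gp c) x / s x)"
    by (rule ext) (simp add: diff_divide_distrib)
  ultimately show ?thesis by simp
qed

end


lemma pos_int:
  fixes f :: "real \<Rightarrow> real"
  assumes ab: "a < b" and I: "(f has_integral I) {a..b}"
    and nn: "\<forall>x\<in>{a..b}. 0 \<le> f x"
    and cont: "continuous_on {a<..<b} f"
    and pos: "\<forall>x\<in>{a<..<b}. x \<noteq> x0 \<longrightarrow> 0 < f x"
  shows "0 < I"
proof -
  obtain c d where cd: "a < c" "c < d" "d < b" "x0 \<notin> {c..d}"
  proof (cases "x0 < (a+b)/2")
    case True
    show ?thesis by (rule that[of "(a+b)/2" "(a+3*b)/4"]) (use ab True in auto)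
  next
    case False
    show ?thesis by (rule that[of "(3*a+b)/4" "(5*a+3*b)/8"]) (use ab False in auto)
  qed
  have sub: "{c..d} \<subseteq> {a<..<b}" using cd by auto
  have cc: "continuous_on {c..d} f" using continuous_on_subset[OF cont sub] .
  obtain xm where xm: "xm \<in> {c..d}" "\<forall>y\<in>{c..d}. f xm \<le> f y"
    using continuous_attains_inf[OF compact_Icc _ cc] cd by auto
  have dpos: "0 < f xm" using pos xm sub cd by auto
  have fi: "f integrable_on {c..d}" using integrable_continuous_interval[OF cc] .
  have "((\<lambda>x. f xm) has_integral (d - c) * f xm) {c..d}"
    using has_integral_const_real[of "f xm" c d] cd by simp
  then have "(d - c) * f xm \<le> integral {c..d} f"
    using has_integral_le[OF _ integrable_integral[OF fi]] xm by blast
  moreover have "integral {c..d} f \<le> I"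
    using has_integral_subset_le[OF _ integrable_integral[OF fi] I] nn cd by auto
  moreover have "0 < (d - c) * f xm" using cd dpos by simp
  ultimately show ?thesis by linarith
qed

lemma const_sign:
  fixes f :: "real \<Rightarrow> real"
  assumes cont: "continuous_on S f" and conv: "\<forall>x\<in>S. \<forall>y\<in>S. {x..y} \<subseteq> S"
    and nz: "\<forall>x\<in>S. f x \<noteq> 0"
  shows "(\<forall>x\<in>S. 0 < f x) \<or> (\<forall>x\<in>S. f x < 0)"
proof (rule ccontr)
  assume "\<not> ?thesis"
  then obtain x y where xy: "x \<in> S" "y \<in> S" "f x < 0" "0 < f y"
    using nz by (meson linorder_neqE_linordered_idom)
  show False
  proof (cases "x \<le> y")
    case True
    have "continuous_on {x..y} f" using continuous_on_subset[OF cont] conv xy by blast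
    then obtain t where "x \<le> t" "t \<le> y" "f t = 0" using IVT'[of f x 0 y] xy True by auto
    then have "t \<in> {x..y}" by simp
    then have "t \<in> S" using conv xy by blast
    then show False using nz \<open>f t = 0\<close> by auto
  next
    case False
    have "continuous_on {y..x} f" using continuous_on_subset[OF cont] conv xy by blast
    then obtain t where "y \<le> t" "t \<le> x" "f t = 0" using IVT2'[of f x 0 y] xy False by auto
    then have "t \<in> {y..x}" by simp
    then have "t \<in> S" using conv xy by blast
    then show False using nz \<open>f t = 0\<close> by auto
  qed
qed

lemma ivt_sign:
  fixes f :: "real \<Rightarrow> real"
  assumes "a < b" "continuous_on {a..b} f" "f a * f b < 0"
  shows "\<exists>t. a < t \<and> t < b \<and> f t = 0"
proof -
  have "f a < 0 \<and> 0 < f b \<or> 0 < f a \<and> f b < 0" using assms(3) by (auto simp: mult_less_0_iff)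
  then obtain t where t: "a \<le> t" "t \<le> b" "f t = 0"
    using IVT'[of f a 0 b] IVT2'[of f b 0 a] assms(1,2) by force
  then have "t \<noteq> a" "t \<noteq> b" using assms(3) by auto
  then show ?thesis using t by (intro exI[of _ t]) auto
qed

context LL begin

lemma period_sign:
  assumes m: "m \<in> {1..g}"
    and per: "((\<lambda>x. u x / s x) has_integral 0) {E (2*m-1)..E (2*m)}"
    and uc: "continuous_on UNIV u"
    and sg: "(\<forall>x. inG m x \<longrightarrow> 0 \<le> u x \<and> (x \<noteq> x0 \<longrightarrow> u x \<noteq> 0)) \<or>
             (\<forall>x. inG m x \<longrightarrow> u x \<le> 0 \<and> (x \<noteq> x0 \<longrightarrow> u x \<noteq> 0))"
  shows False
proof -
  define a where "a = E (2*m-1)"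
  define b where "b = E (2*m)"
  have ab: "a < b" unfolding a_def b_def by (rule E_mono) (use m in auto)
  have inG_iff: "inG m x \<longleftrightarrow> x \<in> {a<..<b}" for x unfolding inG_def a_def b_def by auto
  have sz: "s a = 0" "s b = 0" using s_zero[OF m] unfolding a_def b_def by auto
  have sp: "x \<in> {a<..<b} \<Longrightarrow> 0 < s x" for x using s_pos[OF m] inG_iff by blast
  have contf: "continuous_on {a<..<b} (\<lambda>x. u x / s x)"
    by (intro continuous_intros continuous_on_subset[OF uc] continuous_on_subset[OF s_cont[of UNIV]])
       (auto dest: sp)
  from sg show False
  proof
    assume H: "\<forall>x. inG m x \<longrightarrow> 0 \<le> u x \<and> (x \<noteq> x0 \<longrightarrow> u x \<noteq> 0)"
    have "0 < (0::real)"
    proof (rule pos_int[OF ab])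
      show "((\<lambda>x. u x / s x) has_integral 0) {a..b}" using per unfolding a_def b_def .
      show "\<forall>x\<in>{a..b}. 0 \<le> u x / s x"
      proof
        fix x assume x: "x \<in> {a..b}"
        show "0 \<le> u x / s x"
        proof (cases "x = a \<or> x = b")
          case True then show ?thesis using sz by auto
        next
          case False
          then have "x \<in> {a<..<b}" using x by auto
          then show ?thesis using H inG_iff sp by (simp add: less_imp_le)
        qed
      qed
      show "continuous_on {a<..<b} (\<lambda>x. u x / s x)" by (rule contf)
      show "\<forall>x\<in>{a<..<b}. x \<noteq> x0 \<longrightarrow> 0 < u x / s x"
        using H inG_iff sp by (metis divide_pos_pos order_le_less)
    qed
    then show False by simp
  next
    assume H: "\<forall>x. inG m x \<longrightarrow> u x \<le> 0 \<and> (x \<noteq> x0 \<longrightarrow> u x \<noteq> 0)"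
    have "0 < - (0::real)"
    proof (rule pos_int[OF ab])
      show "((\<lambda>x. - (u x / s x)) has_integral - 0) {a..b}"
        using has_integral_neg[OF per] unfolding a_def b_def .
      show "\<forall>x\<in>{a..b}. 0 \<le> - (u x / s x)"
      proof
        fix x assume x: "x \<in> {a..b}"
        show "0 \<le> - (u x / s x)"
        proof (cases "x = a \<or> x = b")
          case True then show ?thesis using sz by auto
        next
          case False
          then have "x \<in> {a<..<b}" using x by auto
          then show ?thesis using H inG_iff sp by (simp add: divide_nonpos_pos)
        qed
      qed
      show "continuous_on {a<..<b} (\<lambda>x. - (u x / s x))" by (intro continuous_intros contf)
      show "\<forall>x\<in>{a<..<b}. x \<noteq> x0 \<longrightarrow> 0 < - (u x / s x)"
      proof (intro ballI impI)
        fix x assume "x \<in> {a<..<b}" "x \<noteq> x0"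
        then have "u x < 0" "0 < s x" using H inG_iff sp by (auto simp: order_le_less)
        then show "0 < - (u x / s x)" by (simp add: divide_neg_pos)
      qed
    qed
    then show False by simp
  qed
qed

lemma root_in_gap:
  assumes m: "m \<in> {1..g}"
    and per: "((\<lambda>x. poly G x / s x) has_integral 0) {E (2*m-1)..E (2*m)}"
  shows "\<exists>y. inG m y \<and> poly G y = 0"
proof (rule ccontr)
  assume H: "\<not> ?thesis"
  have "(\<forall>x\<in>{x. inG m x}. 0 < poly G x) \<or> (\<forall>x\<in>{x. inG m x}. poly G x < 0)"
    by (rule const_sign) (use H in \<open>auto intro!: continuous_intros simp: inG_def\<close>)
  then have "(\<forall>x. inG m x \<longrightarrow> 0 \<le> poly G x \<and> (x \<noteq> 0 \<longrightarrow> poly G x \<noteq> 0)) \<or>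
             (\<forall>x. inG m x \<longrightarrow> poly G x \<le> 0 \<and> (x \<noteq> 0 \<longrightarrow> poly G x \<noteq> 0))"
    by (auto simp: order_le_less)
  then show False
    using period_sign[OF m per continuous_on_poly[OF continuous_on_id]] by blast
qed

end


context LL begin

lemma no_double_root:
  assumes Gnz: "G \<noteq> 0" and dG: "degree G \<le> Suc g"
    and per: "\<forall>m\<in>{1..g}. ((\<lambda>x. poly G x / s x) has_integral 0) {E (2*m-1)..E (2*m)}"
    and r0: "poly G x0 = 0" and r1: "poly (pderiv G) x0 = 0"
  shows False
proof -
  define L where "L = [:-x0, 1:]"
  obtain H where H: "G = L * H" using r0 unfolding L_def by (auto simp: poly_eq_0_iff_dvd elim!: dvdE)
  have d: "pderiv G = L * pderiv H + H * pderiv L" unfolding H by (rule pderiv_mult)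
  have dL1: "pderiv L = 1" unfolding L_def by (simp add: pderiv_pCons)
  have pL: "poly L x0 = 0" unfolding L_def by simp
  have "poly (pderiv G) x0 = poly H x0" unfolding d dL1 by (simp add: pL)
  then have "poly H x0 = 0" using r1 by simp
  then obtain K where K: "H = L * K" unfolding L_def by (auto simp: poly_eq_0_iff_dvd elim!: dvdE)
  have GK: "G = L * (L * K)" using H K by simp
  have pG: "poly G x = (x - x0)^2 * poly K x" for x by (simp add: GK L_def power2_eq_square algebra_simps)
  have Lnz: "L \<noteq> 0" unfolding L_def by simp
  have Knz: "K \<noteq> 0" using Gnz GK by auto
  have dL: "degree L = 1" unfolding L_def by simp
  have dGK: "degree G = degree K + 2"
    using GK degree_mult_eq[OF Lnz, of "L*K"] degree_mult_eq[OF Lnz Knz] Lnz Knz dL by simp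
  have Kroot: "\<forall>m\<in>{1..g}. \<exists>y. inG m y \<and> poly K y = 0"
  proof
    fix m assume m: "m \<in> {1..g}"
    show "\<exists>y. inG m y \<and> poly K y = 0"
    proof (cases "inG m x0")
      case False
      obtain y where y: "inG m y" "poly G y = 0" using root_in_gap[OF m] per m by blast
      then have "y \<noteq> x0" using False by auto
      then have "poly K y = 0" using y(2) pG[of y] by simp
      then show ?thesis using y(1) by blast
    next
      case True
      show ?thesis
      proof (rule ccontr)
        assume nr: "\<not> ?thesis"
        have "(\<forall>x\<in>{x. inG m x}. 0 < poly K x) \<or> (\<forall>x\<in>{x. inG m x}. poly K x < 0)"
          by (rule const_sign) (use nr in \<open>auto intro!: continuous_intros simp: inG_def\<close>)
        then have "(\<forall>x. inG m x \<longrightarrow> 0 \<le> poly G x \<and> (x \<noteq> x0 \<longrightarrow> poly G x \<noteq> 0)) \<or>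
             (\<forall>x. inG m x \<longrightarrow> poly G x \<le> 0 \<and> (x \<noteq> x0 \<longrightarrow> poly G x \<noteq> 0))"
          unfolding pG by (auto simp: zero_le_mult_iff mult_le_0_iff)
        then show False
          using period_sign[OF m _ continuous_on_poly[OF continuous_on_id]] per m by blast
      qed
    qed
  qed
  then obtain Y where Y: "\<forall>m\<in>{1..g}. inG m (Y m) \<and> poly K (Y m) = 0" by metis
  have inj: "inj_on Y {1..g}"
    by (rule inj_onI) (use Y inG_disj in metis)
  have "Y ` {1..g} \<subseteq> {x. poly K x = 0}" using Y by auto
  then have "card (Y ` {1..g}) \<le> card {x. poly K x = 0}"
    by (rule card_mono[OF poly_roots_finite[OF Knz]])
  also have "\<dots> \<le> degree K" by (rule card_poly_roots_bound[OF Knz])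
  finally have "g \<le> degree K" using card_image[OF inj] by simp
  then show False using dGK dG by simp
qed

lemma pderiv_lin [simp]: "pderiv [:a, 1:] = 1"
  by (simp add: pderiv_pCons)

lemma Qd_lam: assumes k: "k \<in> {1..g}"
  shows "poly (pderiv Qp) (lam k) = (\<Prod>m\<in>{1..g}-{k}. lam k - lam m)"
proof -
  have "pderiv Qp = (\<Sum>a\<in>{1..g}. (\<Prod>b\<in>{1..g}-{a}. [:-lam b, 1:]) * pderiv [:-lam a, 1:])"
    unfolding Qp_def by (rule pderiv_prod)
  then have "poly (pderiv Qp) (lam k) = (\<Sum>a\<in>{1..g}. \<Prod>b\<in>{1..g}-{a}. lam k - lam b)"
    by (simp add: poly_sum poly_prod)
  also have "\<dots> = (\<Prod>b\<in>{1..g}-{k}. lam k - lam b) + (\<Sum>a\<in>{1..g}-{k}. \<Prod>b\<in>{1..g}-{a}. lam k - lam b)"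
    using k by (simp add: sum.remove)
  also have "(\<Sum>a\<in>{1..g}-{k}. \<Prod>b\<in>{1..g}-{a}. lam k - lam b) = 0"
  proof (rule sum.neutral, rule ballI)
    fix a assume "a \<in> {1..g}-{k}"
    then have "k \<in> {1..g}-{a}" using k by auto
    then show "(\<Prod>b\<in>{1..g}-{a}. lam k - lam b) = 0" by (intro prod_zero) auto
  qed
  finally show ?thesis by simp
qed

lemma lam_inj: "k \<in> {1..g} \<Longrightarrow> m \<in> {1..g} \<Longrightarrow> lam k = lam m \<Longrightarrow> k = m"
  using lam_mono by (metis less_irrefl linorder_neqE_nat)

lemma Qd_nz: "k \<in> {1..g} \<Longrightarrow> poly (pderiv Qp) (lam k) \<noteq> 0"
  by (simp add: Qd_lam) (use lam_inj in auto)

lemma Q_zero_iff: "Q x = 0 \<longleftrightarrow> (\<exists>k\<in>{1..g}. x = lam k)"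
  unfolding Q_def by auto

lemma pderiv_Gp: "poly (pderiv (Gp c)) x = poly (pderiv Pp) x - c * poly (pderiv Qp) x"
  by (simp add: Gp_def pderiv_diff pderiv_smult)

lemma period_all: "\<forall>m\<in>{1..g}. ((\<lambda>x. poly (Gp c) x / s x) has_integral 0) {E (2*m-1)..E (2*m)}"
  using period_G by blast

lemma W_nz: "poly Wp x0 \<noteq> 0"
proof
  assume W0: "poly Wp x0 = 0"
  obtain c where c: "poly (Gp c) x0 = 0" "poly (pderiv (Gp c)) x0 = 0"
  proof (cases "Q x0 = 0")
    case False
    show ?thesis
    proof (rule that[of "P x0 / Q x0"])
      show "poly (Gp (P x0 / Q x0)) x0 = 0" using False by simp
      have "poly (pderiv Pp) x0 * Q x0 - P x0 * poly (pderiv Qp) x0 = 0" using W0 by (simp add: poly_Wp)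
      then show "poly (pderiv (Gp (P x0 / Q x0))) x0 = 0" using False
        by (simp add: pderiv_Gp field_simps)
    qed
  next
    case True
    then obtain k where k: "k \<in> {1..g}" "x0 = lam k" using Q_zero_iff by auto
    have qd: "poly (pderiv Qp) x0 \<noteq> 0" using Qd_nz k by simp
    have "P x0 * poly (pderiv Qp) x0 = 0" using W0 True by (simp add: poly_Wp)
    then have P0: "P x0 = 0" using qd by simp
    show ?thesis
    proof (rule that[of "poly (pderiv Pp) x0 / poly (pderiv Qp) x0"])
      show "poly (Gp (poly (pderiv Pp) x0 / poly (pderiv Qp) x0)) x0 = 0" using True P0 by simp
      show "poly (pderiv (Gp (poly (pderiv Pp) x0 / poly (pderiv Qp) x0))) x0 = 0"
        using qd by (simp add: pderiv_Gp)
    qed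
  qed
  show False
    by (rule no_double_root[OF Gp_nz _ period_all c]) (simp add: degree_Gp)
qed

end


context LL begin

definition B :: real where "B = 1 + (\<Sum>k\<in>{0..g}. \<bar>lt k\<bar>) + (\<Sum>k\<in>{1..g}. \<bar>lam k\<bar>)"

lemma B_pos: "1 \<le> B"
  unfolding B_def by (simp add: sum_nonneg add_nonneg_nonneg)

lemma lt_bd: "k \<in> {0..g} \<Longrightarrow> \<bar>lt k\<bar> \<le> B"
proof -
  assume k: "k \<in> {0..g}"
  have "\<bar>lt k\<bar> \<le> (\<Sum>k\<in>{0..g}. \<bar>lt k\<bar>)" by (rule member_le_sum) (use k in auto)
  moreover have "0 \<le> (\<Sum>k\<in>{1..g}. \<bar>lam k\<bar>)" by (simp add: sum_nonneg)
  ultimately show ?thesis unfolding B_def by linarith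
qed

lemma lam_bd: "k \<in> {1..g} \<Longrightarrow> \<bar>lam k\<bar> \<le> B"
proof -
  assume k: "k \<in> {1..g}"
  have "\<bar>lam k\<bar> \<le> (\<Sum>k\<in>{1..g}. \<bar>lam k\<bar>)" by (rule member_le_sum) (use k in auto)
  moreover have "0 \<le> (\<Sum>k\<in>{0..g}. \<bar>lt k\<bar>)" by (simp add: sum_nonneg)
  ultimately show ?thesis unfolding B_def by linarith
qed

lemma ratio_bd:
  fixes x a b :: real
  assumes "2 * B \<le> \<bar>x\<bar>" "\<bar>a\<bar> \<le> B" "\<bar>b\<bar> \<le> B"
  shows "1/3 \<le> (x - a) / (x - b)"
proof -
  have ab: "-B \<le> a" "a \<le> B" "-B \<le> b" "b \<le> B" using assms(2,3) by (auto simp: abs_le_iff)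
  show ?thesis
proof (cases "0 \<le> x")
  case True
  have "2 * B \<le> x" using True assms(1) by simp
  have "0 < x - b" using assms True B_pos by linarith
  moreover have "x - b \<le> 3 * (x - a)" using ab \<open>2 * B \<le> x\<close> by (simp add: algebra_simps)
  ultimately show ?thesis by (subst pos_le_divide_eq) (auto simp: field_simps)
next
  case False
  have "x \<le> - 2 * B" using False assms(1) by simp
  have "x - b < 0" using ab \<open>x \<le> - 2 * B\<close> B_pos by linarith
  moreover have "3 * (x - a) \<le> x - b" using ab \<open>x \<le> - 2 * B\<close> by (simp add: algebra_simps)
  ultimately show ?thesis by (subst neg_le_divide_eq) (auto simp: field_simps)
qed
qed

lemma P_split: "P x = (x - lt 0) * (\<Prod>k\<in>{1..g}. x - lt k)"
proof -
  have "{0..g} = insert 0 {1..g}" by auto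
  then show ?thesis unfolding P_def by simp
qed

lemma r_bd:
  assumes "2 * B \<le> \<bar>x\<bar>"
  shows "(1/3)^g \<le> (\<Prod>k\<in>{1..g}. (x - lt k) / (x - lam k))"
proof -
  have "(\<Prod>k\<in>{1..g}. (1/3::real)) \<le> (\<Prod>k\<in>{1..g}. (x - lt k) / (x - lam k))"
  proof (rule prod_mono)
    fix i assume i: "i \<in> {1..g}"
    have "1/3 \<le> (x - lt i) / (x - lam i)"
      by (rule ratio_bd[OF assms lt_bd[of i] lam_bd[of i]]) (use i in auto)
    then show "0 \<le> (1/3::real) \<and> 1/3 \<le> (x - lt i) / (x - lam i)" by simp
  qed
  then show ?thesis by simp
qed

lemma Q_far_nz: "2 * B \<le> \<bar>x\<bar> \<Longrightarrow> Q x \<noteq> 0"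
proof
  assume x: "2 * B \<le> \<bar>x\<bar>" and "Q x = 0"
  then obtain k where k: "k \<in> {1..g}" "x = lam k" using Q_zero_iff by auto
  then have "\<bar>x\<bar> \<le> B" using lam_bd by simp
  then show False using x B_pos by linarith
qed

lemma h_far: "2 * B \<le> \<bar>x\<bar> \<Longrightarrow> h x = (x - lt 0) * (\<Prod>k\<in>{1..g}. (x - lt k) / (x - lam k))"
  unfolding h_def P_split Q_def by (simp add: prod_dividef)

lemma growth_top: "\<exists>x. T \<le> x \<and> M < h x"
proof -
  define t :: real where "t = (1/3)^g"
  define K :: real where "K = 3^g * (\<bar>M\<bar> + 1)"
  define x where "x = max T (2*B) + 2 * K"
  have t3: "t * 3^g = 1" unfolding t_def by (simp add: power_mult_distrib[symmetric])
  have tp: "0 < t" unfolding t_def by simp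
  have m1: "2 * B \<le> max T (2*B)" "T \<le> max T (2*B)" by simp_all
  have m2: "0 \<le> 2 * K" unfolding K_def by simp
  have xg: "2 * B \<le> x" "T \<le> x" using m1 m2 unfolding x_def by linarith+
  then have x2: "2 * B \<le> \<bar>x\<bar>" by simp
  have xM: "2 * K \<le> x" using m1 B_pos unfolding x_def by linarith
  have lb: "lt 0 \<le> B" using lt_bd[of 0] by (simp add: abs_le_iff)
  have l0: "x / 2 \<le> x - lt 0" using lb xg by linarith
  have l0p: "0 \<le> x - lt 0" using lb xg B_pos by linarith
  have "(x - lt 0) * t \<le> h x"
    unfolding h_far[OF x2] t_def by (rule mult_left_mono[OF r_bd[OF x2] l0p])
  moreover have "(x / 2) * t \<le> (x - lt 0) * t" using l0 tp by simp
  moreover have "K * t \<le> (x / 2) * t" using xM tp by (intro mult_right_mono) auto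
  moreover have "K * t = \<bar>M\<bar> + 1" using t3 unfolding K_def by (simp add: algebra_simps)
  ultimately have "\<bar>M\<bar> + 1 \<le> h x" by linarith
  then have "M < h x" by linarith
  then show ?thesis using xg by blast
qed

lemma growth_bot: "\<exists>x. x \<le> T \<and> h x < M"
proof -
  define t :: real where "t = (1/3)^g"
  define K :: real where "K = 3^g * (\<bar>M\<bar> + 1)"
  define x where "x = min T (-2*B) - (2 * K)"
  have t3: "t * 3^g = 1" unfolding t_def by (simp add: power_mult_distrib[symmetric])
  have tp: "0 < t" unfolding t_def by simp
  have m1: "min T (-2*B) \<le> -2 * B" "min T (-2*B) \<le> T" by simp_all
  have m2: "0 \<le> 2 * K" unfolding K_def by simp
  have xg: "x \<le> -2 * B" "x \<le> T" using m1 m2 unfolding x_def by linarith+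
  then have x2: "2 * B \<le> \<bar>x\<bar>" using B_pos by simp
  have xM: "x \<le> - (2 * K)" using m1 B_pos unfolding x_def by linarith
  have lb: "- B \<le> lt 0" using lt_bd[of 0] by (simp add: abs_le_iff)
  have l0: "x - lt 0 \<le> x / 2" using lb xg by linarith
  have neg: "x - lt 0 \<le> 0" using lb xg B_pos by linarith
  have "h x \<le> (x - lt 0) * t"
    unfolding h_far[OF x2] t_def by (rule mult_left_mono_neg[OF r_bd[OF x2] neg])
  moreover have "(x - lt 0) * t \<le> (x / 2) * t" using l0 tp by simp
  moreover have "(x / 2) * t \<le> (- K) * t" using xM tp by (intro mult_right_mono) auto
  moreover have "(- K) * t = - (\<bar>M\<bar> + 1)" using t3 unfolding K_def by (simp add: algebra_simps)
  ultimately have "h x \<le> - (\<bar>M\<bar> + 1)" by linarith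
  then have "h x < M" by linarith
  then show ?thesis using xg by blast
qed

lemma h_deriv: "Q x \<noteq> 0 \<Longrightarrow> DERIV h x :> poly Wp x / (Q x * Q x)"
proof -
  assume q: "Q x \<noteq> 0"
  have dP: "DERIV P x :> poly (pderiv Pp) x" using poly_DERIV[of Pp x] by simp
  have dQ: "DERIV Q x :> poly (pderiv Qp) x" using poly_DERIV[of Qp x] by simp
  have "h = (\<lambda>x. P x / Q x)" unfolding h_def by (rule ext) simp
  then show ?thesis using DERIV_divide[OF dP dQ q] by (simp add: poly_Wp)
qed

lemma inI_Q: "j \<le> g \<Longrightarrow> inI j x \<Longrightarrow> Q x \<noteq> 0"
proof
  assume j: "j \<le> g" and x: "inI j x" and q: "Q x = 0"
  then obtain k where k: "k \<in> {1..g}" "x = lam k" using Q_zero_iff by auto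
  show False
  proof (cases "k \<le> j")
    case True
    then have "j \<noteq> 0" "lam j < x" using k x unfolding inI_def by auto
    moreover have "lam k \<le> lam j" using lam_mono_le[of k j] k True j \<open>j \<noteq> 0\<close> by auto
    ultimately show False using k by simp
  next
    case False
    then have "j \<noteq> g" "x < lam (j+1)" using k x unfolding inI_def by auto
    moreover have "lam (j+1) \<le> lam k" using lam_mono_le[of "j+1" k] k False j by auto
    ultimately show False using k by simp
  qed
qed

lemma inI_between: "inI j x1 \<Longrightarrow> inI j x2 \<Longrightarrow> x1 \<le> t \<Longrightarrow> t \<le> x2 \<Longrightarrow> inI j t"
  unfolding inI_def by auto

lemma W_pos: "0 < poly Wp x"
proof -
  have cont: "continuous_on UNIV (poly Wp)" by (rule continuous_on_poly[OF continuous_on_id])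
  have "(\<forall>x\<in>UNIV. 0 < poly Wp x) \<or> (\<forall>x\<in>UNIV. poly Wp x < 0)"
    using const_sign[of UNIV "poly Wp"] cont W_nz by auto
  moreover have "\<not> (\<forall>x\<in>UNIV. poly Wp x < 0)"
  proof
    assume neg: "\<forall>x\<in>UNIV. poly Wp x < 0"
    define x1 where "x1 = (if g = 0 then 0 else lam g + 1)"
    have i1: "inI g x1" unfolding inI_def x1_def by auto
    obtain x where x: "x1 + 1 \<le> x" "h x1 < h x" using growth_top by blast
    have ix: "inI g x" using i1 x unfolding inI_def by auto
    have "h x1 > h x"
    proof (rule DERIV_neg_imp_decreasing[of x1 x h])
      show "x1 < x" using x by simp
      fix t assume "x1 \<le> t" "t \<le> x"
      then have "Q t \<noteq> 0" using inI_Q[OF _ inI_between[OF i1 ix]] by auto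
      then have "0 < Q t * Q t" by (metis not_real_square_gt_zero)
      then show "\<exists>y. DERIV h t :> y \<and> y < 0"
        using h_deriv \<open>Q t \<noteq> 0\<close> neg by (intro exI[of _ "poly Wp t / (Q t * Q t)"]) (auto simp: divide_neg_pos)
    qed
    then show False using x by simp
  qed
  ultimately show ?thesis by auto
qed

lemma h_incr: "j \<le> g \<Longrightarrow> inI j x1 \<Longrightarrow> inI j x2 \<Longrightarrow> x1 < x2 \<Longrightarrow> h x1 < h x2"
proof -
  assume j: "j \<le> g" and i1: "inI j x1" and i2: "inI j x2" and lt: "x1 < x2"
  show "h x1 < h x2"
  proof (rule DERIV_pos_imp_increasing[OF lt])
    fix t assume "x1 \<le> t" "t \<le> x2"
    then have "Q t \<noteq> 0" using inI_Q[OF j inI_between[OF i1 i2]] by auto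
    then have "0 < Q t * Q t" by (metis not_real_square_gt_zero)
    then show "\<exists>y. DERIV h t :> y \<and> 0 < y"
      using h_deriv \<open>Q t \<noteq> 0\<close> W_pos by (intro exI[of _ "poly Wp t / (Q t * Q t)"]) auto
  qed
qed

lemma h_mono: "j \<le> g \<Longrightarrow> inI j x1 \<Longrightarrow> inI j x2 \<Longrightarrow> x1 \<le> x2 \<Longrightarrow> h x1 \<le> h x2"
  using h_incr[of j x1 x2] by (cases "x1 = x2") auto

end


lemma sgn1:
  fixes a b c d :: real
  assumes "0 < a*b" "0 < c*d" "b*d < 0" shows "a*c < 0"
proof -
  have e: "(a*c)*(b*d) = (a*b)*(c*d)" by (simp add: algebra_simps)
  have "0 < (a*b)*(c*d)" using assms(1,2) by (rule mult_pos_pos)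
  then have p: "0 < (a*c)*(b*d)" using e by metis
  show ?thesis
  proof (rule ccontr)
    assume "\<not> a * c < 0"
    then have "(a*c)*(b*d) \<le> 0" using mult_nonneg_nonpos[of "a*c" "b*d"] assms(3) by linarith
    then show False using p by simp
  qed
qed

lemma sgn2:
  fixes a b c :: real
  assumes "a*b < 0" "c*b < 0" shows "0 < a*c"
proof -
  have e: "(a*c)*(b*b) = (a*b)*(c*b)" by (simp add: algebra_simps)
  have "0 < (a*c)*(b*b)" unfolding e using assms by (simp add: mult_neg_neg)
  then show ?thesis by (auto simp: zero_less_mult_iff)
qed

context LL begin

abbreviation Qd :: "real \<Rightarrow> real" where "Qd x \<equiv> poly (pderiv Qp) x"

lemma Q_lam: "k \<in> {1..g} \<Longrightarrow> Q (lam k) = 0"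
  using Q_zero_iff by auto

lemma Wlam: "k \<in> {1..g} \<Longrightarrow> 0 < (- P (lam k)) * Qd (lam k)"
  using W_pos[of "lam k"] by (simp add: poly_Wp Q_lam)

lemma Qd_last: "1 \<le> g \<Longrightarrow> 0 < Qd (lam g)"
  by (simp add: Qd_lam, rule prod_pos) (auto intro!: lam_mono)

lemma Qd_cons: assumes j: "1 \<le> j" "j < g" shows "Qd (lam j) * Qd (lam (j+1)) < 0"
proof -
  define A where "A = {1..g} - {j} - {j+1}"
  have A2: "{1..g} - {j+1} - {j} = A" unfolding A_def by auto
  have j1: "j \<in> {1..g}" "j+1 \<in> {1..g}" using j by auto
  have l: "lam j < lam (j+1)" using lam_mono j1 by simp
  have e1: "Qd (lam j) = (lam j - lam (j+1)) * (\<Prod>m\<in>A. lam j - lam m)"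
    unfolding Qd_lam[OF j1(1)] A_def by (rule prod.remove) (use j1 in auto)
  have e2: "Qd (lam (j+1)) = (lam (j+1) - lam j) * (\<Prod>m\<in>A. lam (j+1) - lam m)"
    unfolding Qd_lam[OF j1(2)] A2[symmetric] by (rule prod.remove) (use j1 in auto)
  have pp: "0 < (\<Prod>m\<in>A. (lam j - lam m) * (lam (j+1) - lam m))"
  proof (rule prod_pos)
    fix m assume m: "m \<in> A"
    then have m1: "m \<in> {1..g}" unfolding A_def by auto
    show "0 < (lam j - lam m) * (lam (j+1) - lam m)"
    proof (cases "m < j")
      case True
      then have "lam m < lam j" using lam_mono m1 j1 by blast
      then show ?thesis using l by simp
    next
      case False
      then have "j + 1 < m" using m unfolding A_def by auto
      then have "lam (j+1) < lam m" using lam_mono m1 j1 by blast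
      then show ?thesis using l by (simp add: mult_neg_neg)
    qed
  qed
  have "Qd (lam j) * Qd (lam (j+1)) =
     ((lam j - lam (j+1)) * (lam (j+1) - lam j)) * (\<Prod>m\<in>A. (lam j - lam m) * (lam (j+1) - lam m))"
    unfolding e1 e2 prod.distrib by (simp add: algebra_simps)
  moreover have "(lam j - lam (j+1)) * (lam (j+1) - lam j) < 0" using l by (simp add: mult_neg_pos)
  ultimately show ?thesis using pp by (simp add: mult_neg_pos)
qed

lemma Q_left: assumes g: "1 \<le> g" and x: "x < lam 1" shows "Q x * Qd (lam 1) < 0"
proof -
  have one: "1 \<in> {1..g}" using g by auto
  define A where "A = {1..g} - {1}"
  have e1: "Q x = (x - lam 1) * (\<Prod>m\<in>A. x - lam m)"
    unfolding Q_def A_def by (rule prod.remove) (use one in auto)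
  have e2: "Qd (lam 1) = (\<Prod>m\<in>A. lam 1 - lam m)" unfolding A_def by (rule Qd_lam[OF one])
  have pp: "0 < (\<Prod>m\<in>A. (x - lam m) * (lam 1 - lam m))"
  proof (rule prod_pos)
    fix m assume m: "m \<in> A"
    then have "lam 1 < lam m" using lam_mono one unfolding A_def by auto
    then show "0 < (x - lam m) * (lam 1 - lam m)" using x by (simp add: mult_neg_neg)
  qed
  have "Q x * Qd (lam 1) = (x - lam 1) * (\<Prod>m\<in>A. (x - lam m) * (lam 1 - lam m))"
    unfolding e1 e2 prod.distrib by (simp add: algebra_simps)
  then show ?thesis using pp x by (simp add: mult_neg_pos)
qed

lemma Q_right: "(g = 0 \<or> lam g < x) \<Longrightarrow> 0 < Q x"
  unfolding Q_def
proof (rule prod_pos)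
  fix m assume H: "g = 0 \<or> lam g < x" and m: "m \<in> {1..g}"
  then have "g \<noteq> 0" by auto
  then have "lam m \<le> lam g" using lam_mono_le m by auto
  then show "0 < x - lam m" using H \<open>g \<noteq> 0\<close> by simp
qed

lemma G_eq: "Q x \<noteq> 0 \<Longrightarrow> P x - c * Q x = Q x * (h x - c)"
  unfolding h_def by (simp add: field_simps)

lemma root_exists: assumes j: "j \<le> g" shows "\<exists>x. inI j x \<and> P x - c * Q x = 0"
proof -
  define f where "f x = P x - c * Q x" for x
  have fc: "continuous_on A f" for A unfolding f_def
    using continuous_on_poly[OF continuous_on_id, of A Pp] continuous_on_poly[OF continuous_on_id, of A Qp]
    by (intro continuous_intros) auto
  obtain xl xr where lr: "xl < xr" "f xl * f xr < 0" "\<forall>t. xl < t \<and> t < xr \<longrightarrow> inI j t"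
  proof (cases "g = 0")
    case True
    then have j0: "j = 0" using j by simp
    have Q1: "Q x = 1" for x using True unfolding Q_def by simp
    obtain xl where xl: "h xl < c" using growth_bot by blast
    obtain xr where xr: "xl + 1 \<le> xr" "c < h xr" using growth_top by blast
    show ?thesis
    proof (rule that[of xl xr])
      show "xl < xr" using xr by simp
      have "f xl < 0" "0 < f xr" unfolding f_def using G_eq[of xl c] G_eq[of xr c] Q1 xl xr by auto
      then show "f xl * f xr < 0" by (simp add: mult_neg_pos)
      show "\<forall>t. xl < t \<and> t < xr \<longrightarrow> inI j t" unfolding inI_def using j0 True by simp
    qed
  next
    case False
    then have g1: "1 \<le> g" by simp
    show ?thesis
    proof (cases "j = g")
      case True
      have gg: "g \<in> {1..g}" using g1 by simp
      obtain xr where xr: "lam g + 1 \<le> xr" "c < h xr" using growth_top by blast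
      have Qr: "0 < Q xr" using Q_right[of xr] xr by simp
      have "P (lam g) < 0" using Wlam[OF gg] Qd_last[OF g1] by (simp add: mult_less_0_iff)
      then have "f (lam g) < 0" unfolding f_def using Q_lam[OF gg] by simp
      moreover have "0 < f xr" unfolding f_def using G_eq[of xr c] Qr xr by simp
      ultimately show ?thesis
        by (intro that[of "lam g" xr]) (use xr True in \<open>auto simp: mult_neg_pos inI_def\<close>)
    next
      case jg: False
      show ?thesis
      proof (cases "j = 0")
        case True
        have one: "1 \<in> {1..g}" using g1 by simp
        obtain xl where xl: "xl \<le> lam 1 - 1" "h xl < c" using growth_bot by blast
        have Ql: "Q xl * Qd (lam 1) < 0" using Q_left[OF g1] xl by simp
        have "P (lam 1) * Qd (lam 1) < 0" using Wlam[OF one] by simp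
        then have "0 < Q xl * P (lam 1)" using sgn2[OF Ql] by simp
        moreover have "Q xl \<noteq> 0" using Ql by auto
        then have "f xl = Q xl * (h xl - c)" unfolding f_def using G_eq by auto
        moreover have "f (lam 1) = P (lam 1)" unfolding f_def using Q_lam[OF one] by simp
        ultimately have "f xl * f (lam 1) = (Q xl * P (lam 1)) * (h xl - c)" by simp
        also have "\<dots> < 0" using xl \<open>0 < Q xl * P (lam 1)\<close> by (simp add: mult_pos_neg)
        finally show ?thesis
          by (intro that[of xl "lam 1"]) (use xl True in \<open>auto simp: inI_def\<close>)
      next
        case False
        have j1: "1 \<le> j" "j < g" using False jg j by auto
        have jj: "j \<in> {1..g}" "j+1 \<in> {1..g}" using j1 by auto
        have "(- P (lam j)) * (- P (lam (j+1))) < 0"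
          by (rule sgn1[OF Wlam[OF jj(1)] Wlam[OF jj(2)] Qd_cons[OF j1]])
        then have "f (lam j) * f (lam (j+1)) < 0" unfolding f_def using Q_lam[OF jj(1)] Q_lam[OF jj(2)] by simp
        moreover have "lam j < lam (j+1)" using lam_mono jj by simp
        ultimately show ?thesis
          by (intro that[of "lam j" "lam (j+1)"]) (use j1 in \<open>auto simp: inI_def\<close>)
      qed
    qed
  qed
  obtain t where t: "xl < t" "t < xr" "f t = 0" using ivt_sign[OF lr(1) fc lr(2)] by blast
  then show ?thesis using lr(3) unfolding f_def by blast
qed

lemma root_unique:
  assumes j: "j \<le> g" and x: "inI j x" "P x - c * Q x = 0" and y: "inI j y" "P y - c * Q y = 0"
  shows "x = y"
proof -
  have hx: "h x = c" using G_eq[of x c] x inI_Q[OF j x(1)] by simp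
  have hy: "h y = c" using G_eq[of y c] y inI_Q[OF j y(1)] by simp
  show ?thesis
  proof (rule ccontr)
    assume "x \<noteq> y"
    then have "x < y \<or> y < x" by arith
    then show False using h_incr[OF j x(1) y(1)] h_incr[OF j y(1) x(1)] hx hy by auto
  qed
qed

definition zz :: "nat \<Rightarrow> real \<Rightarrow> real" where
  "zz j c = (THE x. inI j x \<and> P x - c * Q x = 0)"

lemma zz_prop: assumes j: "j \<le> g" shows "inI j (zz j c) \<and> P (zz j c) - c * Q (zz j c) = 0"
proof -
  have "\<exists>!x. inI j x \<and> P x - c * Q x = 0"
    using root_exists[OF j] root_unique[OF j] by blast
  then show ?thesis unfolding zz_def by (rule theI')
qed

lemma zz_eq: "j \<le> g \<Longrightarrow> inI j x \<Longrightarrow> P x - c * Q x = 0 \<Longrightarrow> zz j c = x"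
  using zz_prop root_unique by blast

lemma h_zz: "j \<le> g \<Longrightarrow> h (zz j c) = c"
  using zz_prop[of j c] G_eq[of "zz j c" c] inI_Q[of j "zz j c"] by auto

end


context LL begin

definition zv :: "nat \<Rightarrow> real \<Rightarrow> real" where "zv j v = zz j (- v / 12)"

lemma zv_inI: "j \<le> g \<Longrightarrow> inI j (zv j v)"
  unfolding zv_def using zz_prop by blast

lemma zv_root: "j \<le> g \<Longrightarrow> 12 * P (zv j v) + v * Q (zv j v) = 0"
  unfolding zv_def using zz_prop[of j "- v / 12"] by (simp add: field_simps)

lemma zv_h: "j \<le> g \<Longrightarrow> h (zv j v) = - v / 12"
  unfolding zv_def by (rule h_zz)

lemma zv_eq: "j \<le> g \<Longrightarrow> inI j x \<Longrightarrow> 12 * P x + v * Q x = 0 \<Longrightarrow> zv j v = x"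
  unfolding zv_def by (rule zz_eq) (auto simp: field_simps)

lemma zv_lt: assumes "j < j'" "j' \<le> g" shows "zv j v < zv j' v"
proof -
  have a: "zv j v < lam (j+1)" using zv_inI[of j v] assms unfolding inI_def by auto
  have b: "lam j' < zv j' v" using zv_inI[of j' v] assms unfolding inI_def by auto
  have "lam (j+1) \<le> lam j'" using lam_mono_le[of "j+1" j'] assms by auto
  then show ?thesis using a b by simp
qed

lemma core_low: assumes j: "j \<le> g" and t: "inI j t" and v: "v \<le> -12 * h t - 1" shows "t < zv j v"
proof (rule ccontr)
  assume "\<not> t < zv j v"
  then have "h (zv j v) \<le> h t" using h_mono[OF j zv_inI[OF j] t] by simp
  then show False using zv_h[OF j, of v] v by simp
qed

lemma core_up: assumes j: "j \<le> g" and t: "inI j t" and v: "-12 * h t + 1 \<le> v" shows "zv j v < t"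
proof (rule ccontr)
  assume "\<not> zv j v < t"
  then have "h t \<le> h (zv j v)" using h_mono[OF j t zv_inI[OF j]] by simp
  then show False using zv_h[OF j, of v] v by simp
qed

lemma lim_bot: assumes j: "j < g" shows "(zv j \<longlongrightarrow> lam (j+1)) at_bot"
proof (rule order_tendstoI)
  fix u assume "lam (j+1) < u"
  then show "eventually (\<lambda>v. zv j v < u) at_bot"
    using zv_inI[of j] j unfolding inI_def by (intro always_eventually) (auto intro: less_trans)
next
  fix l assume l: "l < lam (j+1)"
  define t where "t = (if j = 0 then l else max l ((lam j + lam (j+1)) / 2))"
  have ll: "lam j < lam (j+1)" if "j \<noteq> 0" using lam_mono[of j "j+1"] j that by simp
  have t: "inI j t" "l \<le> t" unfolding t_def inI_def using l ll by (auto simp: less_max_iff_disj)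
  show "eventually (\<lambda>v. l < zv j v) at_bot"
    unfolding eventually_at_bot_linorder
    using core_low[OF _ t(1)] j t(2) by (intro exI[of _ "-12 * h t - 1"]) (auto intro: le_less_trans)
qed

lemma lim_bot_g: "filterlim (zv g) at_top at_bot"
  unfolding filterlim_at_top
proof
  fix Z
  define t where "t = (if g = 0 then Z else max Z (lam g + 1))"
  have t: "inI g t" "Z \<le> t" unfolding t_def inI_def by auto
  show "eventually (\<lambda>v. Z \<le> zv g v) at_bot"
    unfolding eventually_at_bot_linorder
    using core_low[OF _ t(1)] t(2) by (intro exI[of _ "-12 * h t - 1"]) (auto intro: order_trans less_imp_le)
qed

lemma lim_top: assumes j: "1 \<le> j" "j \<le> g" shows "(zv j \<longlongrightarrow> lam j) at_top"
proof (rule order_tendstoI)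
  fix l assume "l < lam j"
  then show "eventually (\<lambda>v. l < zv j v) at_top"
    using zv_inI[of j] j unfolding inI_def by (intro always_eventually) (auto intro: less_trans)
next
  fix u assume u: "lam j < u"
  define t where "t = (if j = g then u else min u ((lam j + lam (j+1)) / 2))"
  have ll: "lam j < lam (j+1)" if "j \<noteq> g" using lam_mono[of j "j+1"] j that by simp
  have t: "inI j t" "t \<le> u" unfolding t_def inI_def using u ll j by (auto simp: min_less_iff_disj)
  show "eventually (\<lambda>v. zv j v < u) at_top"
    unfolding eventually_at_top_linorder
    using core_up[OF _ t(1)] j t(2) by (intro exI[of _ "-12 * h t + 1"]) (auto intro: less_le_trans)
qed

lemma lim_top_0: "filterlim (zv 0) at_bot at_top"
  unfolding filterlim_at_bot
proof
  fix Z
  define t where "t = (if g = 0 then Z else min Z (lam 1 - 1))"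
  have t: "inI 0 t" "t \<le> Z" unfolding t_def inI_def by auto
  show "eventually (\<lambda>v. zv 0 v \<le> Z) at_top"
    unfolding eventually_at_top_linorder
    using core_up[OF _ t(1)] t(2) by (intro exI[of _ "-12 * h t + 1"]) (auto intro: order_trans less_imp_le)
qed

lemma zv_decr: "j \<le> g \<Longrightarrow> v < w \<Longrightarrow> zv j w < zv j v"
proof (rule ccontr)
  assume j: "j \<le> g" and vw: "v < w" and "\<not> zv j w < zv j v"
  then have "h (zv j v) \<le> h (zv j w)" using h_mono[OF j zv_inI[OF j] zv_inI[OF j]] by simp
  then show False using zv_h[OF j, of v] zv_h[OF j, of w] vw by simp
qed

definition Pc :: "complex poly" where "Pc = (\<Prod>k\<in>{0..g}. [:- complex_of_real (lt k), 1:])"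
definition Qc :: "complex poly" where "Qc = (\<Prod>k\<in>{1..g}. [:- complex_of_real (lam k), 1:])"
definition Fc :: "real \<Rightarrow> complex poly" where "Fc v = smult 12 Pc + smult (complex_of_real v) Qc"

lemma poly_Fc: "poly (Fc v) w = 12 * (\<Prod>k\<in>{0..g}. w - complex_of_real (lt k))
                    + complex_of_real v * (\<Prod>k\<in>{1..g}. w - complex_of_real (lam k))"
  by (simp add: Fc_def Pc_def Qc_def poly_prod)

lemma degree_Fc: "degree (Fc v) = Suc g"
proof -
  have dP: "degree Pc = (\<Sum>k\<in>{0..g}. degree [:- complex_of_real (lt k), 1:])"
    unfolding Pc_def by (rule degree_prod_eq_sum_degree) auto
  have dQ: "degree Qc = (\<Sum>k\<in>{1..g}. degree [:- complex_of_real (lam k), 1:])"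
    unfolding Qc_def by (rule degree_prod_eq_sum_degree) auto
  have "degree (smult 12 Pc) = Suc g" using dP by simp
  moreover have "degree (smult (complex_of_real v) Qc) \<le> g" using dQ by simp
  ultimately show ?thesis unfolding Fc_def by (simp add: degree_add_eq_left)
qed

lemma poly_Fc_real: "poly (Fc v) (complex_of_real x) = complex_of_real (12 * P x + v * Q x)"
  unfolding poly_Fc P_def Q_def by simp

lemma root_set: "{w. poly (Fc v) w = 0} = (\<lambda>j. complex_of_real (zv j v)) ` {0..g}"
proof -
  have Fnz: "Fc v \<noteq> 0" using degree_Fc[of v] by auto
  define R where "R = {w. poly (Fc v) w = 0}"
  define T where "T = (\<lambda>j. complex_of_real (zv j v)) ` {0..g}"
  have fin: "finite R" unfolding R_def by (rule poly_roots_finite[OF Fnz])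
  have cR: "card R \<le> Suc g" unfolding R_def using card_poly_roots_bound[OF Fnz] degree_Fc by simp
  have inj: "inj_on (\<lambda>j. complex_of_real (zv j v)) {0..g}"
  proof (rule inj_onI)
    fix i j assume i: "i \<in> {0..g}" and j: "j \<in> {0..g}" and e: "complex_of_real (zv i v) = complex_of_real (zv j v)"
    then have e': "zv i v = zv j v" by simp
    show "i = j"
    proof (rule ccontr)
      assume "i \<noteq> j"
      then have "i < j \<or> j < i" by arith
      then show False using zv_lt[of i j v] zv_lt[of j i v] i j e' by auto
    qed
  qed
  have cT: "card T = Suc g" unfolding T_def using card_image[OF inj] by simp
  have sub: "T \<subseteq> R" unfolding T_def R_def using zv_root by (auto simp: poly_Fc_real)
  have "card T \<le> card R" by (rule card_mono[OF fin sub])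
  then have "card T = card R" using cT cR by simp
  then show ?thesis using card_subset_eq[OF fin sub] unfolding R_def T_def by simp
qed

lemma gaps: "m \<in> {1..g} \<Longrightarrow> \<exists>k\<le>g. E (2*m-1) < zv k v \<and> zv k v < E (2*m)"
proof -
  assume m: "m \<in> {1..g}"
  obtain y where y: "inG m y" "poly (Gp (- v / 12)) y = 0"
    using root_in_gap[OF m period_G[OF m]] by blast
  have "12 * P y + v * Q y = 0" using y(2) by (simp add: field_simps)
  then have "complex_of_real y \<in> {w. poly (Fc v) w = 0}" by (simp add: poly_Fc_real)
  then obtain k where k: "k \<in> {0..g}" "complex_of_real y = complex_of_real (zv k v)"
    unfolding root_set by auto
  then show ?thesis using y(1) unfolding inG_def by (intro exI[of _ k]) auto
qed

end

theorem lemma5p1: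
  fixes g :: nat and E lam lt :: "nat \<Rightarrow> real"
  assumes E_incr: "\<forall>i<2*g. E i < E (Suc i)"
    and lam_per: "\<forall>j\<in>{1..g}. a_period_vanishes E g (\<lambda>x. \<Prod>k\<in>{1..g}. x - lam k) j"
    and lt_per: "\<forall>j\<in>{1..g}. a_period_vanishes E g (\<lambda>x. \<Prod>k\<in>{0..g}. x - lt k) j"
    and lt_sum: "(\<Sum>k\<in>{0..g}. lt k) = (\<Sum>i\<in>{0..2*g}. E i) / 2"
    and lam_gap: "\<forall>j\<in>{1..g}. E (2*j-1) < lam j \<and> lam j < E (2*j)"
    and lt_gap: "\<forall>j\<in>{1..g}. E (2*j-1) < lt j \<and> lt j < E (2*j)"
  shows "\<exists>z :: nat \<Rightarrow> real \<Rightarrow> real.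
    (\<forall>v::real.
       {w::complex. 12 * (\<Prod>k\<in>{0..g}. w - complex_of_real (lt k))
                    + complex_of_real v * (\<Prod>k\<in>{1..g}. w - complex_of_real (lam k)) = 0}
         = {complex_of_real (z j v) | j. j \<le> g}
     \<and> (\<forall>j\<le>g. (j = 0 \<or> lam j < z j v) \<and> (j = g \<or> z j v < lam (j+1)))
     \<and> (\<forall>j\<in>{1..g}. \<exists>k\<le>g. E (2*j-1) < z k v \<and> z k v < E (2*j)))
    \<and> (\<forall>j\<le>g. \<forall>v w. v < w \<longrightarrow> z j w < z j v)
    \<and> (\<forall>j\<le>g. (if j < g then (z j \<longlongrightarrow> lam (j+1)) at_bot
                         else filterlim (z j) at_top at_bot)
             \<and> (if 1 \<le> j then (z j \<longlongrightarrow> lam j) at_top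
                         else filterlim (z j) at_bot at_top))"
proof -
  interpret L: LL g E lam lt by (rule LL.intro[OF E_incr lam_per lt_per lam_gap])
  have P1: "\<forall>v. {w::complex. 12 * (\<Prod>k\<in>{0..g}. w - complex_of_real (lt k))
                    + complex_of_real v * (\<Prod>k\<in>{1..g}. w - complex_of_real (lam k)) = 0}
          = {complex_of_real (L.zv j v) | j. j \<le> g}"
  proof
    fix v :: real
    have "{w::complex. 12 * (\<Prod>k\<in>{0..g}. w - complex_of_real (lt k))
                    + complex_of_real v * (\<Prod>k\<in>{1..g}. w - complex_of_real (lam k)) = 0}
          = {w. poly (L.Fc v) w = 0}" by (simp add: L.poly_Fc)
    also have "\<dots> = (\<lambda>j. complex_of_real (L.zv j v)) ` {0..g}" by (rule L.root_set)
    also have "\<dots> = {complex_of_real (L.zv j v) | j. j \<le> g}" by auto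
    finally show "{w::complex. 12 * (\<Prod>k\<in>{0..g}. w - complex_of_real (lt k))
                    + complex_of_real v * (\<Prod>k\<in>{1..g}. w - complex_of_real (lam k)) = 0}
          = {complex_of_real (L.zv j v) | j. j \<le> g}" .
  qed
  have P2: "\<forall>v. \<forall>j\<le>g. (j = 0 \<or> lam j < L.zv j v) \<and> (j = g \<or> L.zv j v < lam (j+1))"
    using L.zv_inI unfolding L.inI_def by blast
  have P3: "\<forall>v. \<forall>j\<in>{1..g}. \<exists>k\<le>g. E (2*j-1) < L.zv k v \<and> L.zv k v < E (2*j)"
    using L.gaps by blast
  have P4: "\<forall>j\<le>g. \<forall>v w. v < w \<longrightarrow> L.zv j w < L.zv j v"
    using L.zv_decr by blast
  have P5: "\<forall>j\<le>g. (if j < g then (L.zv j \<longlongrightarrow> lam (j+1)) at_bot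
                         else filterlim (L.zv j) at_top at_bot)
             \<and> (if 1 \<le> j then (L.zv j \<longlongrightarrow> lam j) at_top
                         else filterlim (L.zv j) at_bot at_top)"
  proof (intro allI impI)
    fix j assume j: "j \<le> g"
    have a: "if j < g then (L.zv j \<longlongrightarrow> lam (j+1)) at_bot else filterlim (L.zv j) at_top at_bot"
    proof (cases "j < g")
      case True then show ?thesis using L.lim_bot by simp
    next
      case False then have "j = g" using j by simp
      then show ?thesis using L.lim_bot_g by simp
    qed
    have b: "if 1 \<le> j then (L.zv j \<longlongrightarrow> lam j) at_top else filterlim (L.zv j) at_bot at_top"
    proof (cases "1 \<le> j")
      case True then show ?thesis using L.lim_top j by simp
    next
      case False then have "j = 0" by simp
      then show ?thesis using L.lim_top_0 by simp
    qed
    show "(if j < g then (L.zv j \<longlongrightarrow> lam (j+1)) at_bot else filterlim (L.zv j) at_top at_bot)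
       \<and> (if 1 \<le> j then (L.zv j \<longlongrightarrow> lam j) at_top else filterlim (L.zv j) at_bot at_top)"
      using a b by blast
  qed
  show ?thesis using P1 P2 P3 P4 P5 by (intro exI[of _ L.zv]) blast
qed


end
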